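(* Let $0<\alpha\le 2\pi/3$. Then for all $u,v\in V$: $u$ and $v$ are connected in $G^-_\alpha$ if and only if they are connected in $G_R$.
   Context: Let $V$ be a finite set of pairwise distinct points (nodes) in the Euclidean plane, $d$ the Euclidean distance, and $R>0$. Let $G_R=(V,E)$ be the undirected graph with $E=\{\{u,v\}: u\neq v,\ d(u,v)\le R\}$. Fix a finite increasing sequence of radius levels $0<r_1<r_2<\dots<r_k=R$. For $u\in V$ and $1\le i\le k$ let $S_i(u)=\{v\in V\setminus\{u\}: d(u,v)\le r_i\}$. For $0<\alpha<2\pi$, a closed cone of width $\alpha$ with apex $u$ is a set $\{u+t(\cos\varphi,\sin\varphi): t\ge 0,\ \varphi\in[\theta-\alpha/2,\theta+\alpha/2]\}$ for some $\theta$. A finite set $S\subseteq V\setminus\{u\}$ has an $\alpha$-gap (at $u$) if some closed cone of width $\alpha$ with apex $u$ contains no node of $S$ (in particular $\emptyset$ has an $\alpha$-gap). The algorithm CBTC($\alpha$) assigns to each $u$ the index $i_u$ = the least $i\in\{1,\dots,k\}$ such that $S_i(u)$ has no $\alpha$-gap, or $i_u=k$ if there is no such $i$; set $N_\alpha(u)=S_{i_u}(u)$ and $N_\alpha=\{(u,v): v\in N_\alpha(u)\}$ (a directed relation, not necessarily symmetric). Let $E^-_\alpha=\{\{u,v\}: (u,v)\in N_\alpha\text{ and }(v,u)\in N_\alpha\}$ and $G^-_\alpha=(V,E^-_\alpha)$. *)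

theory Defs
  imports "HOL-Analysis.Analysis"
begin

text \<open>Points of the Euclidean plane are modelled as complex numbers; dist is the
Euclidean distance. Radius levels are r 1 < ... < r k = R.\<close>

definition S_level :: "complex set \<Rightarrow> (nat \<Rightarrow> real) \<Rightarrow> nat \<Rightarrow> complex \<Rightarrow> complex set" where
  "S_level V r i u = {v \<in> V - {u}. dist u v \<le> r i}"

definition cone :: "complex \<Rightarrow> real \<Rightarrow> real \<Rightarrow> complex set" where
  "cone u \<theta> \<alpha> = {u + complex_of_real t * cis \<phi> | t \<phi>.
      t \<ge> 0 \<and> \<theta> - \<alpha>/2 \<le> \<phi> \<and> \<phi> \<le> \<theta> + \<alpha>/2}"

definition has_gap :: "real \<Rightarrow> complex \<Rightarrow> complex set \<Rightarrow> bool" where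
  "has_gap \<alpha> u S \<longleftrightarrow> (\<exists>\<theta>. \<forall>v\<in>S. v \<notin> cone u \<theta> \<alpha>)"

definition cbtc_index :: "complex set \<Rightarrow> (nat \<Rightarrow> real) \<Rightarrow> nat \<Rightarrow> real \<Rightarrow> complex \<Rightarrow> nat" where
  "cbtc_index V r k \<alpha> u =
     (if \<exists>i\<in>{1..k}. \<not> has_gap \<alpha> u (S_level V r i u)
      then (LEAST i. i \<in> {1..k} \<and> \<not> has_gap \<alpha> u (S_level V r i u))
      else k)"

definition N_alpha :: "complex set \<Rightarrow> (nat \<Rightarrow> real) \<Rightarrow> nat \<Rightarrow> real \<Rightarrow> complex \<Rightarrow> complex set" where
  "N_alpha V r k \<alpha> u = S_level V r (cbtc_index V r k \<alpha> u) u"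

definition E_minus :: "complex set \<Rightarrow> (nat \<Rightarrow> real) \<Rightarrow> nat \<Rightarrow> real \<Rightarrow> complex \<Rightarrow> complex \<Rightarrow> bool" where
  "E_minus V r k \<alpha> u v \<longleftrightarrow> u \<in> V \<and> v \<in> V \<and> v \<in> N_alpha V r k \<alpha> u \<and> u \<in> N_alpha V r k \<alpha> v"

definition E_R :: "complex set \<Rightarrow> real \<Rightarrow> complex \<Rightarrow> complex \<Rightarrow> bool" where
  "E_R V R u v \<longleftrightarrow> u \<in> V \<and> v \<in> V \<and> u \<noteq> v \<and> dist u v \<le> R"

definition connected_in :: "(complex \<Rightarrow> complex \<Rightarrow> bool) \<Rightarrow> complex \<Rightarrow> complex \<Rightarrow> bool" where
  "connected_in E u v \<longleftrightarrow> E\<^sup>*\<^sup>* u v"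

end

theory Submission
  imports Defs
begin

lemma geom_key:
  fixes u v w :: complex and t b \<phi> \<theta> :: real
  assumes v: "v = u + of_real b * cis \<theta>" and w: "w = u + of_real t * cis \<phi>"
    and t0: "0 < t" and tb: "t < b" and ang: "\<bar>\<phi> - \<theta>\<bar> \<le> pi/3"
  shows "dist w v < b"
proof -
  define \<psi> where "\<psi> = \<phi> - \<theta>"
  have c: "cos \<psi> \<ge> 1/2"
  proof -
    have "cos (pi/3) \<le> cos \<bar>\<psi>\<bar>"
      by (rule cos_monotone_0_pi_le) (use ang \<psi>_def in auto)
    then show ?thesis by (simp add: cos_60)
  qed
  have "w - v = cis \<theta> * (of_real t * cis \<psi> - of_real b)"
    using v w by (simp add: \<psi>_def algebra_simps cis_mult)
  then have d: "dist w v = cmod (of_real t * cis \<psi> - of_real b)"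
    by (simp add: dist_norm norm_mult)
  have "(cmod (of_real t * cis \<psi> - of_real b))^2 = (t * cos \<psi> - b)^2 + (t * sin \<psi>)^2"
    by (simp add: cmod_power2)
  also have "\<dots> = t^2 * ((sin \<psi>)^2 + (cos \<psi>)^2) - 2*t*b*cos \<psi> + b^2"
    by (simp add: power2_eq_square; algebra)
  also have "\<dots> = t^2 - 2*t*b*cos \<psi> + b^2" by simp
  also have "\<dots> < b^2"
  proof -
    have "2*t*b*cos \<psi> \<ge> t*b" using c t0 tb
    proof -
      have "t*b*1 \<le> t*b*(2*cos \<psi>)"
        by (rule mult_left_mono) (use c t0 tb in auto)
      then show ?thesis by (simp add: mult.assoc mult.left_commute)
    qed
    moreover have "t^2 < t*b" using t0 tb by (simp add: power2_eq_square)
    ultimately show ?thesis by linarith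
  qed
  finally have "(cmod (of_real t * cis \<psi> - of_real b))^2 < b^2" .
  then have "cmod (of_real t * cis \<psi> - of_real b) < b"
    by (rule power2_less_imp_less) (use tb t0 in linarith)
  then show ?thesis using d by simp
qed

lemma rtranclp_symI:
  assumes "\<And>x y. E x y \<Longrightarrow> E y x" and "E\<^sup>*\<^sup>* a b"
  shows "E\<^sup>*\<^sup>* b a"
  using assms(2)
proof (induction rule: rtranclp_induct)
  case base then show ?case by simp
next
  case (step y z)
  then show ?case using assms(1) by (meson converse_rtranclp_into_rtranclp)
qed

context
  fixes V :: "complex set" and r :: "nat \<Rightarrow> real" and k :: nat and R \<alpha> :: real
  assumes fin: "finite V"
    and k1: "k \<ge> 1"
    and mono: "\<And>i j. 1 \<le> i \<Longrightarrow> i < j \<Longrightarrow> j \<le> k \<Longrightarrow> r i < r j"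
    and rk: "r k = R"
    and a0: "0 < \<alpha>" and a1: "\<alpha> \<le> 2 * pi / 3"
begin

lemma idx_range: "cbtc_index V r k \<alpha> u \<in> {1..k}"
proof (cases "\<exists>i\<in>{1..k}. \<not> has_gap \<alpha> u (S_level V r i u)")
  case True
  then have "\<exists>i. i \<in> {1..k} \<and> \<not> has_gap \<alpha> u (S_level V r i u)" by blast
  from LeastI_ex[OF this] True show ?thesis by (simp add: cbtc_index_def)
next
  case False then show ?thesis using k1 by (simp add: cbtc_index_def)
qed

lemma r_le_R: "i \<in> {1..k} \<Longrightarrow> r i \<le> R"
  using mono[of i k] rk by (cases "i = k") auto

lemma N_sub: "w \<in> N_alpha V r k \<alpha> u \<Longrightarrow> w \<in> V \<and> w \<noteq> u \<and> dist u w \<le> R"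
  using idx_range[of u] r_le_R[of "cbtc_index V r k \<alpha> u"]
  by (auto simp: N_alpha_def S_level_def)

lemma step:
  assumes e: "E_R V R u v" and nv: "v \<notin> N_alpha V r k \<alpha> u"
  shows "\<exists>w. E_R V R u w \<and> E_R V R w v \<and> dist u w < dist u v \<and> dist w v < dist u v"
proof -
  have ex: "\<exists>i\<in>{1..k}. \<not> has_gap \<alpha> u (S_level V r i u)"
  proof (rule ccontr)
    assume "\<not> ?thesis"
    then have "N_alpha V r k \<alpha> u = S_level V r k u"
      by (simp add: N_alpha_def cbtc_index_def)
    then show False using e nv rk by (auto simp: E_R_def S_level_def dist_commute)
  qed
  define i where "i = cbtc_index V r k \<alpha> u"
  have "\<exists>i. i \<in> {1..k} \<and> \<not> has_gap \<alpha> u (S_level V r i u)" using ex by blast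
  from LeastI_ex[OF this] ex have ng: "\<not> has_gap \<alpha> u (S_level V r i u)"
    by (simp add: i_def cbtc_index_def)
  have Ni: "N_alpha V r k \<alpha> u = S_level V r i u" by (simp add: N_alpha_def i_def)
  have vV: "v \<in> V" and uv: "u \<noteq> v" using e by (simp_all add: E_R_def)
  have "v \<notin> S_level V r i u" using nv Ni by simp
  then have "\<not> dist u v \<le> r i" using vV uv unfolding S_level_def by blast
  then have ri: "r i < dist u v" by linarith
  define b where "b = cmod (v - u)"
  define \<theta> where "\<theta> = Arg (v - u)"
  have b0: "b = dist u v" by (simp add: b_def dist_norm norm_minus_commute)
  have vrep: "v = u + of_real b * cis \<theta>"
  proof -
    have "v - u \<noteq> 0" using uv by simp
    then have "complex_of_real (cmod (v - u)) * cis (Arg (v - u)) = v - u"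
      by (simp add: cis_Arg complex_sgn_def scaleR_conv_of_real field_simps)
    then show ?thesis by (simp add: b_def \<theta>_def)
  qed
  from ng obtain w where wS: "w \<in> S_level V r i u" and wc: "w \<in> cone u \<theta> \<alpha>"
    unfolding has_gap_def by blast
  from wc obtain t \<phi> where wrep: "w = u + of_real t * cis \<phi>" and t0: "t \<ge> 0"
    and p1: "\<theta> - \<alpha>/2 \<le> \<phi>" and p2: "\<phi> \<le> \<theta> + \<alpha>/2"
    unfolding cone_def by blast
  have wu: "w \<noteq> u" and wV: "w \<in> V" and duw: "dist u w \<le> r i" using wS by (auto simp: S_level_def)
  have tdist: "dist u w = t" using wrep t0 by (simp add: dist_norm norm_mult)
  have tpos: "0 < t" using wu wrep t0 by (cases "t = 0") auto
  have tb: "t < b" using tdist duw ri b0 by linarith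
  have ang: "\<bar>\<phi> - \<theta>\<bar> \<le> pi/3" unfolding abs_le_iff using p1 p2 a1 by linarith
  have dwv: "dist w v < b" by (rule geom_key[OF vrep wrep tpos tb ang])
  have "dist u v \<le> R" using e by (simp add: E_R_def)
  moreover have "w \<noteq> v" using wS nv Ni by auto
  ultimately show ?thesis using e wV wu tdist tb b0 dwv
    by (auto simp: E_R_def)
qed

lemma edge_conn:
  assumes "E_R V R u v"
  shows "connected_in (E_minus V r k \<alpha>) u v"
proof -
  define C where "C = (\<lambda>(u::complex) (v::complex). card {p \<in> V \<times> V. dist (fst p) (snd p) < dist u v})"
  have sub: "C x y < C u v" if "x \<in> V" "y \<in> V" "dist x y < dist u v" for x y u v
  proof -
    have "{p \<in> V \<times> V. dist (fst p) (snd p) < dist x y} \<subset> {p \<in> V \<times> V. dist (fst p) (snd p) < dist u v}"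
    proof (rule psubsetI)
      show "{p \<in> V \<times> V. dist (fst p) (snd p) < dist x y} \<subseteq> {p \<in> V \<times> V. dist (fst p) (snd p) < dist u v}"
        using that by auto
      have "(x, y) \<in> {p \<in> V \<times> V. dist (fst p) (snd p) < dist u v}" using that by auto
      moreover have "(x, y) \<notin> {p \<in> V \<times> V. dist (fst p) (snd p) < dist x y}" by auto
      ultimately show "{p \<in> V \<times> V. dist (fst p) (snd p) < dist x y} \<noteq> {p \<in> V \<times> V. dist (fst p) (snd p) < dist u v}"
        by blast
    qed
    then show ?thesis unfolding C_def
      by (rule psubset_card_mono[rotated]) (use fin in auto)
  qed
  have esym: "\<And>x y. E_minus V r k \<alpha> x y \<Longrightarrow> E_minus V r k \<alpha> y x"
    by (auto simp: E_minus_def)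
  have "\<forall>u v. C u v = n \<longrightarrow> E_R V R u v \<longrightarrow> (E_minus V r k \<alpha>)\<^sup>*\<^sup>* u v" for n
  proof (induction n rule: less_induct)
    case (less n)
    show ?case
    proof (intro allI impI)
      fix u v assume Cn: "C u v = n" and e: "E_R V R u v"
      have IH: "(E_minus V r k \<alpha>)\<^sup>*\<^sup>* x y" if "E_R V R x y" "dist x y < dist u v" for x y
        using less[rule_format, OF _ refl that(1)] sub[OF _ _ that(2)] that(1) Cn
        by (auto simp: E_R_def)
      show "(E_minus V r k \<alpha>)\<^sup>*\<^sup>* u v"
      proof (cases "v \<in> N_alpha V r k \<alpha> u \<and> u \<in> N_alpha V r k \<alpha> v")
        case True
        then show ?thesis using e by (auto simp: E_minus_def E_R_def)
      next
        case False
        then have "v \<notin> N_alpha V r k \<alpha> u \<or> u \<notin> N_alpha V r k \<alpha> v" by blast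
        then show ?thesis
        proof
          assume "v \<notin> N_alpha V r k \<alpha> u"
          then obtain w where h1: "E_R V R u w" and h2: "E_R V R w v"
              and h3: "dist u w < dist u v" and h4: "dist w v < dist u v"
            using step[OF e] by blast
          have "(E_minus V r k \<alpha>)\<^sup>*\<^sup>* u w" by (rule IH[OF h1 h3])
          moreover have "(E_minus V r k \<alpha>)\<^sup>*\<^sup>* w v" by (rule IH[OF h2 h4])
          ultimately show ?thesis by (rule rtranclp_trans)
        next
          assume nu: "u \<notin> N_alpha V r k \<alpha> v"
          have e': "E_R V R v u" using e by (auto simp: E_R_def dist_commute)
          obtain w where h1: "E_R V R v w" and h2: "E_R V R w u"
              and h3: "dist v w < dist v u" and h4: "dist w u < dist v u"
            using step[OF e' nu] by blast
          have "(E_minus V r k \<alpha>)\<^sup>*\<^sup>* v w" by (rule IH[OF h1]) (use h3 in \<open>simp add: dist_commute\<close>)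
          moreover have "(E_minus V r k \<alpha>)\<^sup>*\<^sup>* w u" by (rule IH[OF h2]) (use h4 in \<open>simp add: dist_commute\<close>)
          ultimately have "(E_minus V r k \<alpha>)\<^sup>*\<^sup>* v u" by (rule rtranclp_trans)
          then show ?thesis using rtranclp_symI[of "E_minus V r k \<alpha>" v u] esym by blast
        qed
      qed
    qed
  qed
  note main = this
  have "(E_minus V r k \<alpha>)\<^sup>*\<^sup>* u v" using main[of "C u v"] assms by blast
  then show ?thesis by (simp add: connected_in_def)
qed

end

theorem theorem4:
  fixes V :: "complex set" and r :: "nat \<Rightarrow> real" and k :: nat and R \<alpha> :: real
  assumes "finite V"
    and "R > 0"
    and "k \<ge> 1"
    and "0 < r 1"
    and "\<And>i j. 1 \<le> i \<Longrightarrow> i < j \<Longrightarrow> j \<le> k \<Longrightarrow> r i < r j"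
    and "r k = R"
    and "0 < \<alpha>" and "\<alpha> \<le> 2 * pi / 3"
    and "u \<in> V" and "v \<in> V"
  shows "connected_in (E_minus V r k \<alpha>) u v \<longleftrightarrow> connected_in (E_R V R) u v"
proof
  assume "connected_in (E_minus V r k \<alpha>) u v"
  then have "(E_minus V r k \<alpha>)\<^sup>*\<^sup>* u v" by (simp add: connected_in_def)
  then have "(E_R V R)\<^sup>*\<^sup>* u v"
  proof (induction rule: rtranclp_induct)
    case base then show ?case by simp
  next
    case (step y z)
    have "E_R V R y z"
      using step(2) N_sub[where V=V and r=r and k=k and R=R and \<alpha>=\<alpha>, OF assms(1,3,5,6,7,8), of z y]
      by (auto simp: E_minus_def E_R_def)
    then show ?case using step(3) by (meson rtranclp.rtrancl_into_rtrancl)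
  qed
  then show "connected_in (E_R V R) u v" by (simp add: connected_in_def)
next
  assume "connected_in (E_R V R) u v"
  then have "(E_R V R)\<^sup>*\<^sup>* u v" by (simp add: connected_in_def)
  then have "(E_minus V r k \<alpha>)\<^sup>*\<^sup>* u v"
  proof (induction rule: rtranclp_induct)
    case base then show ?case by simp
  next
    case (step y z)
    have "(E_minus V r k \<alpha>)\<^sup>*\<^sup>* y z"
      using edge_conn[where V=V and r=r and k=k and R=R and \<alpha>=\<alpha>, OF assms(1,3,5,6,7,8) step(2)] by (simp add: connected_in_def)
    then show ?case using step(3) by (meson rtranclp_trans)
  qed
  then show "connected_in (E_minus V r k \<alpha>) u v" by (simp add: connected_in_def)
qed

end
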